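(* Let $k\ge1$ be an integer, and for a measurable set $R\subseteq[0,b]^k$ define $$I_R(t)=\int_{R}\prod_{i=1}^k g(x_i)\,dx_1\cdots dx_k\int_{0\le s_1\le s_2\le\cdots\le s_k\le t}V_0u_1\cdots u_k\,e^{\lambda_0t}\prod_{j=1}^k e^{x_j(t-s_j)}\,ds_1\cdots ds_k,$$ so that $I_{[0,b]^k}(t)=EZ_k(t)$. Let $b_t=b-(2k+1)(\log t)/t$ and $R_t=\{(x_1,\dots,x_k)\in[0,b]^k: x_i\le b_t\text{ for some }i\}$. If condition $(\ast)$ holds, then $I_{R_t}(t)=o\!\left(t^{-2k}e^{(\lambda_0+kb)t}\right)$ as $t\to\infty$.
   Context: Here $\lambda_0>0$, $V_0>0$, $u_1,\dots,u_k>0$ are constants, and $g$ is a probability density on $[0,\infty)$ (the density of the fitness increment). $Z_k(t)$ is the number of type-$k$ cells at time $t$ in the model where $Z_0(t)=V_0e^{\lambda_0t}$, type-$(j+1)$ cells arise from type-$j$ cells at rate $u_{j+1}$ per cell with birth rate increased by an independent increment of density $g$, and all cells die at rate $b_0=a_0-\lambda_0$; its mean equals $I_{[0,b]^k}(t)$ above. Condition $(\ast)$: for some $b>0$, $g$ vanishes outside $[0,b]$, $g$ is continuous at $b$, $g(b)>0$, and $g\le G$ on $[0,b]$ for some constant $G<\infty$. $f(t)=o(h(t))$ means $f(t)/h(t)\to0$. *)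

theory Defs
  imports "HOL-Probability.Probability" "HOL-Library.Landau_Symbols"
begin

text \<open>Vectors in R^k are functions on the index set {..<k} (coordinate j stands for
  the paper's index j+1), with the product Lebesgue measure.\<close>

abbreviation lebk :: "nat \<Rightarrow> (nat \<Rightarrow> real) measure" where
  "lebk k \<equiv> Pi\<^sub>M {..<k} (\<lambda>_. lborel)"

definition ordered_simplex :: "nat \<Rightarrow> real \<Rightarrow> (nat \<Rightarrow> real) set" where
  "ordered_simplex k t = {s \<in> space (lebk k).
      (\<forall>j<k. 0 \<le> s j \<and> s j \<le> t) \<and> (\<forall>i j. i \<le> j \<longrightarrow> j < k \<longrightarrow> s i \<le> s j)}"

definition time_int ::
  "nat \<Rightarrow> real \<Rightarrow> real \<Rightarrow> (nat \<Rightarrow> real) \<Rightarrow> real \<Rightarrow> (nat \<Rightarrow> real) \<Rightarrow> real" where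
  "time_int k V0 lam0 u t x =
     (LINT s : ordered_simplex k t | lebk k.
        V0 * (\<Prod>i\<in>{1..k}. u i) * exp (lam0 * t) * (\<Prod>j<k. exp (x j * (t - s j))))"

definition I_R ::
  "nat \<Rightarrow> (real \<Rightarrow> real) \<Rightarrow> real \<Rightarrow> real \<Rightarrow> (nat \<Rightarrow> real) \<Rightarrow> (nat \<Rightarrow> real) set \<Rightarrow> real \<Rightarrow> real" where
  "I_R k g V0 lam0 u R t =
     (LINT x : R | lebk k. (\<Prod>i<k. g (x i)) * time_int k V0 lam0 u t x)"

definition R_t :: "nat \<Rightarrow> real \<Rightarrow> real \<Rightarrow> (nat \<Rightarrow> real) set" where
  "R_t k b t = {x \<in> PiE {..<k} (\<lambda>_. {0..b}).
      \<exists>i<k. x i \<le> b - (2 * real k + 1) * ln t / t}"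

text \<open>Condition (*), together with g being a probability density on [0,oo).\<close>
definition cond_star :: "(real \<Rightarrow> real) \<Rightarrow> real \<Rightarrow> real \<Rightarrow> bool" where
  "cond_star g b G \<longleftrightarrow>
     b > 0 \<and> g \<in> borel_measurable borel \<and> (\<forall>x. 0 \<le> g x) \<and>
     (LINT x : {0..} | lborel. g x) = 1 \<and>
     (\<forall>x. x \<notin> {0..b} \<longrightarrow> g x = 0) \<and>
     continuous (at_left b) g \<and> g b > 0 \<and> (\<forall>x\<in>{0..b}. g x \<le> G)"

end

theory Submission imports Defs begin

lemma abs_LINT_le:
  fixes f :: "'a \<Rightarrow> real"
  assumes "(\<integral>\<^sup>+x. ennreal \<bar>f x\<bar> \<partial>M) \<le> ennreal B" "0 \<le> B"
  shows "\<bar>integral\<^sup>L M f\<bar> \<le> B"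
proof (cases "integrable M f")
  case True
  have "ennreal (norm (integral\<^sup>L M f)) \<le> (\<integral>\<^sup>+x. norm (f x) \<partial>M)"
    using integral_norm_bound_ennreal[OF True] by simp
  also have "\<dots> \<le> ennreal B" using assms(1) by simp
  finally show ?thesis using assms(2) by (simp add: ennreal_le_iff)
next
  case False
  then show ?thesis using assms by (simp add: not_integrable_integral_eq)
qed

lemma exp_box_int:
  fixes t c :: real assumes "t > 0"
  shows "(\<integral>\<^sup>+y. ennreal (exp (t*y)) * indicator {0..c} y \<partial>lborel) \<le> ennreal (exp (t*c) / t)"
proof (cases "0 \<le> c")
  case True
  have "((\<lambda>y. exp (t*y)) has_integral (exp (t*c)/t - exp (t*0)/t)) {0..c}"
  proof (rule fundamental_theorem_of_calculus)
    show "((\<lambda>y. exp (t*y)/t) has_vector_derivative exp (t*y)) (at y within {0..c})" for y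
      unfolding has_real_derivative_iff_has_vector_derivative [symmetric]
      using assms by (auto intro!: derivative_eq_intros)
  qed (use True in auto)
  then have "(\<integral>\<^sup>+y. ennreal (exp (t*y)) * indicator {0..c} y \<partial>lborel) = ennreal (exp (t*c)/t - 1/t)"
    by (subst nn_integral_has_integral_lebesgue') auto
  also have "\<dots> \<le> ennreal (exp (t*c) / t)" using assms
    by (intro ennreal_leI) (simp add: divide_right_mono)
  finally show ?thesis .
next
  case False
  then have "(\<lambda>y. ennreal (exp (t*y)) * indicator {0..c} y) = (\<lambda>_. 0)"
    by (auto simp: fun_eq_iff)
  then show ?thesis by simp
qed

lemma inner_bound:
  fixes t :: real and x :: "nat \<Rightarrow> real"
  assumes t: "t \<ge> 0" and x: "\<And>j. j < k \<Longrightarrow> 0 \<le> x j"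
  shows "\<bar>time_int k V0 lam0 u t x\<bar>
     \<le> \<bar>V0 * (\<Prod>i\<in>{1..k}. u i)\<bar> * exp (lam0 * t) * exp (t * (\<Sum>j<k. x j)) * t ^ k"
proof -
  interpret P: product_sigma_finite "\<lambda>_. lborel" by standard
  let ?E = "\<bar>V0 * (\<Prod>i\<in>{1..k}. u i)\<bar> * exp (lam0 * t) * exp (t * (\<Sum>j<k. x j))"
  let ?box = "PiE {..<k} (\<lambda>_. {0..t})"
  let ?F = "\<lambda>s. V0 * (\<Prod>i\<in>{1..k}. u i) * exp (lam0 * t) * (\<Prod>j<k. exp (x j * (t - s j)))"
  have E0: "0 \<le> ?E" using t by simp
  have pw: "ennreal \<bar>indicator (ordered_simplex k t) s *\<^sub>R ?F s\<bar> \<le> ennreal ?E * indicator ?box s"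
    if "s \<in> space (lebk k)" for s
  proof (cases "s \<in> ordered_simplex k t")
    case True
    then have sb: "\<And>j. j < k \<Longrightarrow> 0 \<le> s j \<and> s j \<le> t" unfolding ordered_simplex_def by auto
    have "s \<in> ?box" using that sb by (auto simp: space_PiM PiE_def Pi_def)
    have "(\<Prod>j<k. exp (x j * (t - s j))) \<le> (\<Prod>j<k. exp (t * x j))"
      by (rule prod_mono) (use x sb in \<open>auto simp: mult_left_mono algebra_simps\<close>)
    also have "\<dots> = exp (t * (\<Sum>j<k. x j))" by (simp add: exp_sum sum_distrib_left)
    finally have pr: "(\<Prod>j<k. exp (x j * (t - s j))) \<le> exp (t * (\<Sum>j<k. x j))" .
    have "\<bar>?F s\<bar> = \<bar>V0 * (\<Prod>i\<in>{1..k}. u i)\<bar> * exp (lam0 * t) * (\<Prod>j<k. exp (x j * (t - s j)))"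
      by (simp add: abs_mult prod_nonneg)
    also have "\<dots> \<le> ?E"
      by (intro mult_left_mono pr) auto
    finally show ?thesis using True \<open>s \<in> ?box\<close> by (simp add: ennreal_leI)
  qed simp
  have "(\<integral>\<^sup>+s. ennreal \<bar>indicator (ordered_simplex k t) s *\<^sub>R ?F s\<bar> \<partial>lebk k)
      \<le> (\<integral>\<^sup>+s. ennreal ?E * indicator ?box s \<partial>lebk k)"
    by (rule nn_integral_mono) (rule pw)
  also have "\<dots> = ennreal ?E * emeasure (lebk k) ?box"
    by (subst nn_integral_cmult_indicator) auto
  also have "emeasure (lebk k) ?box = (\<Prod>j<k. emeasure lborel {0..t})"
    by (subst P.emeasure_PiM) auto
  also have "\<dots> = ennreal (t ^ k)" using t by (simp add: ennreal_power)
  finally have "(\<integral>\<^sup>+s. ennreal \<bar>indicator (ordered_simplex k t) s *\<^sub>R ?F s\<bar> \<partial>lebk k) \<le> ennreal (?E * t^k)"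
    using E0 t by (simp add: ennreal_mult)
  then show ?thesis unfolding time_int_def set_lebesgue_integral_def
    by (rule abs_LINT_le) (use E0 t in simp)
qed

lemma prod_mono_ennreal:
  "(\<And>i. i \<in> A \<Longrightarrow> f i \<le> g i) \<Longrightarrow> prod f A \<le> (prod g A :: ennreal)"
  by (induct A rule: infinite_finite_induct) (auto intro!: mult_mono)

lemma outer_bound:
  fixes t :: real and k :: nat
  assumes t: "t > 0" and cs: "cond_star g b G"
  defines "bt \<equiv> b - (2 * real k + 1) * ln t / t"
  shows "\<bar>I_R k g V0 lam0 u (R_t k b t) t\<bar> \<le>
     G ^ k * \<bar>V0 * (\<Prod>i\<in>{1..k}. u i)\<bar> * exp (lam0 * t) * t ^ k *
       (real k * (exp (t * (real k * b)) * t powr (- (2 * real k + 1)) / t ^ k))"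
proof -
  interpret P: product_sigma_finite "\<lambda>_. lborel" by standard
  let ?C = "\<bar>V0 * (\<Prod>i\<in>{1..k}. u i)\<bar>"
  let ?c = "G ^ k * ?C * exp (lam0 * t) * t ^ k"
  let ?V = "exp (t * (real k * b)) * t powr (- (2 * real k + 1)) / t ^ k"
  define S where "S i j = (if j = i then {0..bt} else {0..b})" for i j :: nat
  define f where "f i j y = ennreal (exp (t*y)) * indicator (S i j) y" for i j :: nat and y :: real
  have g0: "\<And>y. 0 \<le> g y" and gG: "\<And>y. y \<in> {0..b} \<Longrightarrow> g y \<le> G" and gb: "g b > 0" and b0: "b > 0"
    using cs unfolding cond_star_def by auto
  have G0: "0 \<le> G" using gG[of b] gb b0 by auto
  have c0: "0 \<le> ?c" using G0 t by simp
  have V0': "0 \<le> ?V" using t by simp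
  have pw: "ennreal \<bar>indicator (R_t k b t) x *\<^sub>R ((\<Prod>i<k. g (x i)) * time_int k V0 lam0 u t x)\<bar>
      \<le> ennreal ?c * (\<Sum>i<k. \<Prod>j<k. f i j (x j))" for x
  proof (cases "x \<in> R_t k b t")
    case True
    then have xb: "\<And>j. j < k \<Longrightarrow> 0 \<le> x j \<and> x j \<le> b"
      and "\<exists>i<k. x i \<le> bt" unfolding R_t_def bt_def by (auto simp: PiE_def Pi_def)
    then obtain i where i: "i < k" "x i \<le> bt" by blast
    have "\<bar>\<Prod>i<k. g (x i)\<bar> \<le> (\<Prod>i<k. G)"
      unfolding abs_prod by (rule prod_mono) (use xb g0 gG in auto)
    also have "\<dots> = G ^ k" by simp
    finally have pg: "\<bar>\<Prod>i<k. g (x i)\<bar> \<le> G ^ k" .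
    have ti: "\<bar>time_int k V0 lam0 u t x\<bar> \<le> ?C * exp (lam0 * t) * exp (t * (\<Sum>j<k. x j)) * t ^ k"
      by (rule inner_bound) (use t xb in auto)
    have "\<bar>(\<Prod>i<k. g (x i)) * time_int k V0 lam0 u t x\<bar>
        \<le> G ^ k * (?C * exp (lam0 * t) * exp (t * (\<Sum>j<k. x j)) * t ^ k)"
      using mult_mono[OF pg ti zero_le_power[OF G0] abs_ge_zero] by (simp only: abs_mult)
    also have "\<dots> = ?c * exp (t * (\<Sum>j<k. x j))" by (simp add: algebra_simps)
    finally have le1: "\<bar>(\<Prod>i<k. g (x i)) * time_int k V0 lam0 u t x\<bar> \<le> ?c * exp (t * (\<Sum>j<k. x j))" .
    have "ennreal (exp (t * (\<Sum>j<k. x j))) = (\<Prod>j<k. ennreal (exp (t * x j)))"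
      by (simp add: prod_ennreal exp_sum sum_distrib_left)
    also have "\<dots> = (\<Prod>j<k. f i j (x j))"
      by (rule prod.cong) (use xb i in \<open>auto simp: f_def S_def\<close>)
    also have "\<dots> \<le> (\<Sum>i<k. \<Prod>j<k. f i j (x j))"
      by (rule member_le_sum) (use i in auto)
    finally have le2: "ennreal (exp (t * (\<Sum>j<k. x j))) \<le> (\<Sum>i<k. \<Prod>j<k. f i j (x j))" .
    have "ennreal \<bar>indicator (R_t k b t) x *\<^sub>R ((\<Prod>i<k. g (x i)) * time_int k V0 lam0 u t x)\<bar>
        \<le> ennreal (?c * exp (t * (\<Sum>j<k. x j)))"
      using True le1 by (intro ennreal_leI) simp
    also have "\<dots> = ennreal ?c * ennreal (exp (t * (\<Sum>j<k. x j)))"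
      using c0 by (simp add: ennreal_mult)
    also have "\<dots> \<le> ennreal ?c * (\<Sum>i<k. \<Prod>j<k. f i j (x j))"
      by (rule mult_left_mono[OF le2]) simp
    finally show ?thesis .
  qed simp
  have fm0[measurable]: "f i j \<in> borel_measurable borel" for i j
    unfolding f_def S_def by measurable
  have fm: "f i j \<in> borel_measurable lborel" for i j
    using fm0[of i j] by simp
  have ff: "(\<integral>\<^sup>+y. f i j y \<partial>lborel) \<le> ennreal (exp (t * (if j = i then bt else b)) / t)" for i j
    unfolding f_def S_def using exp_box_int[OF t] by (cases "j = i") auto
  have sumc: "(\<Sum>j<k. (if j = i then bt else b)) = real k * b + (bt - b)" if "i < k" for i
  proof -
    have "(\<Sum>j<k. (if j = i then bt else b)) = (\<Sum>j<k. b + (if j = i then bt - b else 0))"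
      by (rule sum.cong) auto
    also have "\<dots> = real k * b + (bt - b)" using that by (simp add: sum.distrib)
    finally show ?thesis .
  qed
  have termb: "(\<integral>\<^sup>+x. (\<Prod>j<k. f i j (x j)) \<partial>lebk k) \<le> ennreal ?V" if "i < k" for i
  proof -
    have "(\<integral>\<^sup>+x. (\<Prod>j<k. f i j (x j)) \<partial>lebk k) = (\<Prod>j<k. \<integral>\<^sup>+y. f i j y \<partial>lborel)"
      by (rule P.product_nn_integral_prod) (auto simp: fm)
    also have "\<dots> \<le> (\<Prod>j<k. ennreal (exp (t * (if j = i then bt else b)) / t))"
      by (rule prod_mono_ennreal) (rule ff)
    also have "\<dots> = ennreal (\<Prod>j<k. exp (t * (if j = i then bt else b)) / t)"
      using t by (simp add: prod_ennreal)
    also have "(\<Prod>j<k. exp (t * (if j = i then bt else b)) / t) = exp (t * (\<Sum>j<k. (if j = i then bt else b))) / t ^ k"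
      by (simp add: prod_dividef exp_sum sum_distrib_left)
    also have "\<dots> = ?V"
    proof -
      have "t * (real k * b + (bt - b)) = t * (real k * b) + (- (2 * real k + 1)) * ln t"
        using t unfolding bt_def by (simp add: field_simps)
      then show ?thesis using t sumc[OF that] by (simp add: exp_add powr_def)
    qed
    finally show ?thesis .
  qed
  have meas: "(\<lambda>x. \<Prod>j<k. f i j (x j)) \<in> borel_measurable (lebk k)" for i
    by measurable
  have "(\<integral>\<^sup>+x. ennreal \<bar>indicator (R_t k b t) x *\<^sub>R ((\<Prod>i<k. g (x i)) * time_int k V0 lam0 u t x)\<bar> \<partial>lebk k)
      \<le> (\<integral>\<^sup>+x. ennreal ?c * (\<Sum>i<k. \<Prod>j<k. f i j (x j)) \<partial>lebk k)"
    by (rule nn_integral_mono) (rule pw)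
  also have "\<dots> = ennreal ?c * (\<Sum>i<k. \<integral>\<^sup>+x. (\<Prod>j<k. f i j (x j)) \<partial>lebk k)"
    using meas by (simp add: nn_integral_cmult nn_integral_sum)
  also have "\<dots> \<le> ennreal ?c * (\<Sum>i<k. ennreal ?V)"
    by (intro mult_left_mono sum_mono termb) auto
  also have "(\<Sum>i<k. ennreal ?V) = ennreal (\<Sum>i<k. ?V)"
    by (rule sum_ennreal) (rule V0')
  also have "(\<Sum>i<k. ?V) = real k * ?V" by simp
  also have "ennreal ?c * ennreal (real k * ?V) = ennreal (?c * (real k * ?V))"
    by (rule ennreal_mult[symmetric, OF c0 mult_nonneg_nonneg[OF of_nat_0_le_iff V0']])
  finally have "(\<integral>\<^sup>+x. ennreal \<bar>indicator (R_t k b t) x *\<^sub>R ((\<Prod>i<k. g (x i)) * time_int k V0 lam0 u t x)\<bar> \<partial>lebk k)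
      \<le> ennreal (?c * (real k * ?V))" .
  then show ?thesis unfolding I_R_def set_lebesgue_integral_def
    by (rule abs_LINT_le) (rule mult_nonneg_nonneg[OF c0 mult_nonneg_nonneg[OF of_nat_0_le_iff V0']])
qed

theorem lemma3:
  fixes k :: nat and g :: "real \<Rightarrow> real" and b G V0 lam0 :: real and u :: "nat \<Rightarrow> real"
  assumes "k \<ge> 1" and "lam0 > 0" and "V0 > 0" and "\<forall>i\<in>{1..k}. u i > 0"
    and "cond_star g b G"
  shows "(\<lambda>t. I_R k g V0 lam0 u (R_t k b t) t)
           \<in> o[at_top](\<lambda>t. t powr (- 2 * real k) * exp ((lam0 + real k * b) * t))"
proof (rule smalloI_tendsto)
  let ?C = "\<bar>V0 * (\<Prod>i\<in>{1..k}. u i)\<bar>"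
  let ?D = "G ^ k * ?C * real k"
  let ?h = "\<lambda>t. t powr (- 2 * real k) * exp ((lam0 + real k * b) * t)"
  have key: "G ^ k * ?C * exp (lam0 * t) * t ^ k *
       (real k * (exp (t * (real k * b)) * t powr (- (2 * real k + 1)) / t ^ k)) = ?D / t * ?h t"
    if t: "t > 0" for t
  proof -
    have "t powr (- (2 * real k + 1)) = t powr (- 2 * real k) / t"
      using t by (simp add: powr_add powr_minus_divide algebra_simps powr_diff)
    moreover have "exp ((lam0 + real k * b) * t) = exp (lam0 * t) * exp (t * (real k * b))"
      by (simp add: exp_add[symmetric] algebra_simps)
    ultimately show ?thesis using t by (simp add: field_simps)
  qed
  show "\<forall>\<^sub>F t in at_top. ?h t \<noteq> 0"
    using eventually_gt_at_top[of 0] by eventually_elim simp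
  show "((\<lambda>t. I_R k g V0 lam0 u (R_t k b t) t / ?h t) \<longlongrightarrow> 0) at_top"
  proof (rule Lim_null_comparison)
    show "((\<lambda>t. ?D / t) \<longlongrightarrow> 0) at_top"
      by (rule tendsto_divide_0[OF tendsto_const]) (rule filterlim_at_top_imp_at_infinity[OF filterlim_ident])
    show "\<forall>\<^sub>F t in at_top. norm (I_R k g V0 lam0 u (R_t k b t) t / ?h t) \<le> ?D / t"
      using eventually_gt_at_top[of 0]
    proof eventually_elim
      case (elim t)
      have hp: "?h t > 0" using elim by simp
      have "\<bar>I_R k g V0 lam0 u (R_t k b t) t\<bar> \<le> ?D / t * ?h t"
        using outer_bound[OF elim assms(5), where ?V0.0=V0 and ?lam0.0=lam0 and u=u and k=k] key[OF elim] by simp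
      then show ?case using hp by (simp add: divide_le_eq abs_divide)
    qed
  qed
qed

end
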